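(* Let $G$ be a group and $\mathcal{L}$ a first-order language. Let $\mathfrak{C}$ be one of the following four categories: $\mathfrak{M}_G$ (G-structures with $G$-equivariant morphisms), $\mathfrak{M}_G^{\leq}$ (G-structures with $G$-equivariant embeddings), $\mathfrak{M}_G^{\prec}$ (G-structures with $G$-equivariant elementary embeddings), $\mathfrak{M}_G^{\geq}$ (G-structures with $G$-equivariant submersions). Then $\mathfrak{C}$ is closed under colimits of directed systems: for every directed system $\{\mathcal{M}_i, \rho_{ki}\}_{i,k\in\mathcal{D}}$ of G-structures whose transition maps $\rho_{ki}$ are arrows of $\mathfrak{C}$, the colimit structure $\mathcal{M}=\operatorname{coLim}_{i\in\mathcal{D}}\mathcal{M}_i$ carries a well-defined action of $G$ given by $g[x]=[gx]$ (for $x\in M_i$), with which $\mathcal{M}$ is a G-structure and each canonical quotient map $q_i:\mathcal{M}_i\to\mathcal{M}$, $x\mapsto[x]$, is a $G$-equivariant morphism.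
   Context: A language is $\mathcal{L}=(\mathcal{F},\mathcal{R},\mathcal{C})$ with function, relation and constant symbols, each function/relation symbol having a positive arity. An $\mathcal{L}$-structure $\mathcal{M}$ has a nonempty universe $M$ and interpretations $f^{\mathcal{M}}:M^{n_f}\to M$, $R^{\mathcal{M}}\subset M^{n_R}$, $c^{\mathcal{M}}\in M$. A morphism $\alpha:\mathcal{M}\to\mathcal{N}$ is a map $M\to N$ with $\alpha(f^{\mathcal{M}}(\mathbf a))=f^{\mathcal{N}}(\alpha(\mathbf a))$, $\alpha(R^{\mathcal{M}})\subset R^{\mathcal{N}}$, $\alpha(c^{\mathcal{M}})=c^{\mathcal{N}}$. It is saturated if $\alpha^{-1}(R^{\mathcal{N}})\subset R^{\mathcal{M}}$ for all $R$; an embedding (resp. submersion) is an injective (resp. surjective) saturated morphism; an elementary embedding is an embedding with $\mathcal{M}\models\varphi(\mathbf a)\iff\mathcal{N}\models\varphi(\alpha(\mathbf a))$ for all formulas $\varphi$ and tuples $\mathbf a$. Given a group $G$, a G-structure is an $\mathcal{L}$-structure $\mathcal{M}$ together with an action of $G$ on $M$ such that: the set $\{c^{\mathcal{M}}:c\in\mathcal{C}\}$ is $G$-invariant; for each $R\in\mathcal{R}$, if $(x_1,\dots,x_{n})\in R^{\mathcal{M}}$ and $g_1,\dots,g_n\in G$ then $(g_1x_1,\dots,g_nx_n)\in R^{\mathcal{M}}$; and for each $f\in\mathcal{F}$ of arity $n$, $f^{\mathcal{M}}(gx_1,\dots,gx_n)=g f^{\mathcal{M}}(x_1,\dots,x_n)$.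 Directed system and colimit: $(\mathcal{D},\leq)$ is a poset such that any $i,j$ have some $k\leq i,j$; for $k\leq i$ there are morphisms $\rho_{ki}:\mathcal{M}_i\to\mathcal{M}_k$ with $\rho_{ii}=\mathrm{id}$ and $\rho_{lk}\rho_{ki}=\rho_{li}$. The colimit $\mathcal{M}$ has universe $\bigsqcup_i M_i/\sim$, where for $x\in M_i,y\in M_j$, $x\sim y$ iff there is $k\leq i,j$ with $\rho_{ki}(x)=\rho_{kj}(y)$; $[x]$ denotes the class (germ) of $x$, and germs of tuples are defined likewise. Interpretations: $f^{\mathcal{M}}([\mathbf x])=[f^{\mathcal{M}_i}(\mathbf x)]$ for $\mathbf x\in M_i^{n_f}$; $R^{\mathcal{M}}=\{[\mathbf x]:\mathbf x\in R^{\mathcal{M}_i}\text{ for some } i\}$; $c^{\mathcal{M}}=[c^{\mathcal{M}_i}]$ for any $i$. *)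

theory Defs
  imports "HOL-Algebra.Group_Action"
begin

record ('f, 'r, 'c) language =
  fun_syms   :: "'f set"
  rel_syms   :: "'r set"
  const_syms :: "'c set"
  fun_ar     :: "'f \<Rightarrow> nat"
  rel_ar     :: "'r \<Rightarrow> nat"

definition is_language :: "('f, 'r, 'c) language \<Rightarrow> bool" where
  "is_language L \<longleftrightarrow>
     (\<forall>f \<in> fun_syms L. fun_ar L f > 0) \<and> (\<forall>R \<in> rel_syms L. rel_ar L R > 0)"

definition tuples :: "'a set \<Rightarrow> nat \<Rightarrow> 'a list set" where
  "tuples A n = {xs. set xs \<subseteq> A \<and> length xs = n}"

record ('f, 'r, 'c, 'a) struct =
  univ      :: "'a set"
  fun_int   :: "'f \<Rightarrow> 'a list \<Rightarrow> 'a"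
  rel_int   :: "'r \<Rightarrow> 'a list set"
  const_int :: "'c \<Rightarrow> 'a"

definition is_structure :: "('f, 'r, 'c) language \<Rightarrow> ('f, 'r, 'c, 'a) struct \<Rightarrow> bool" where
  "is_structure L M \<longleftrightarrow>
     univ M \<noteq> {} \<and>
     (\<forall>f \<in> fun_syms L. \<forall>xs \<in> tuples (univ M) (fun_ar L f). fun_int M f xs \<in> univ M) \<and>
     (\<forall>R \<in> rel_syms L. rel_int M R \<subseteq> tuples (univ M) (rel_ar L R)) \<and>
     (\<forall>c \<in> const_syms L. const_int M c \<in> univ M)"

definition morphism ::
  "('f, 'r, 'c) language \<Rightarrow> ('f, 'r, 'c, 'a) struct \<Rightarrow> ('f, 'r, 'c, 'b) struct
   \<Rightarrow> ('a \<Rightarrow> 'b) \<Rightarrow> bool" where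
  "morphism L M N \<alpha> \<longleftrightarrow>
     (\<forall>x \<in> univ M. \<alpha> x \<in> univ N) \<and>
     (\<forall>f \<in> fun_syms L. \<forall>xs \<in> tuples (univ M) (fun_ar L f).
        \<alpha> (fun_int M f xs) = fun_int N f (map \<alpha> xs)) \<and>
     (\<forall>R \<in> rel_syms L. \<forall>xs \<in> rel_int M R. map \<alpha> xs \<in> rel_int N R) \<and>
     (\<forall>c \<in> const_syms L. \<alpha> (const_int M c) = const_int N c)"

definition saturated ::
  "('f, 'r, 'c) language \<Rightarrow> ('f, 'r, 'c, 'a) struct \<Rightarrow> ('f, 'r, 'c, 'b) struct
   \<Rightarrow> ('a \<Rightarrow> 'b) \<Rightarrow> bool" where
  "saturated L M N \<alpha> \<longleftrightarrow> morphism L M N \<alpha> \<and>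
     (\<forall>R \<in> rel_syms L. \<forall>xs \<in> tuples (univ M) (rel_ar L R).
        map \<alpha> xs \<in> rel_int N R \<longrightarrow> xs \<in> rel_int M R)"

definition embedding where
  "embedding L M N \<alpha> \<longleftrightarrow> saturated L M N \<alpha> \<and> inj_on \<alpha> (univ M)"

definition submersion where
  "submersion L M N \<alpha> \<longleftrightarrow> saturated L M N \<alpha> \<and> \<alpha> ` univ M = univ N"

datatype ('f, 'c) trm = Var nat | Fn 'f "('f, 'c) trm list" | Cst 'c

datatype ('f, 'r, 'c) fml =
    Eq "('f, 'c) trm" "('f, 'c) trm"
  | Rel 'r "('f, 'c) trm list"
  | Neg "('f, 'r, 'c) fml"
  | Conj "('f, 'r, 'c) fml" "('f, 'r, 'c) fml"
  | Ex nat "('f, 'r, 'c) fml"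

fun wf_trm :: "('f, 'r, 'c) language \<Rightarrow> ('f, 'c) trm \<Rightarrow> bool" where
  "wf_trm L (Var n) = True"
| "wf_trm L (Fn f ts) = (f \<in> fun_syms L \<and> length ts = fun_ar L f \<and> (\<forall>t \<in> set ts. wf_trm L t))"
| "wf_trm L (Cst c) = (c \<in> const_syms L)"

fun wf_fml :: "('f, 'r, 'c) language \<Rightarrow> ('f, 'r, 'c) fml \<Rightarrow> bool" where
  "wf_fml L (Eq s t) = (wf_trm L s \<and> wf_trm L t)"
| "wf_fml L (Rel R ts) = (R \<in> rel_syms L \<and> length ts = rel_ar L R \<and> (\<forall>t \<in> set ts. wf_trm L t))"
| "wf_fml L (Neg \<phi>) = wf_fml L \<phi>"
| "wf_fml L (Conj \<phi> \<psi>) = (wf_fml L \<phi> \<and> wf_fml L \<psi>)"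
| "wf_fml L (Ex n \<phi>) = wf_fml L \<phi>"

fun eval_trm :: "('f, 'r, 'c, 'a) struct \<Rightarrow> (nat \<Rightarrow> 'a) \<Rightarrow> ('f, 'c) trm \<Rightarrow> 'a" where
  "eval_trm M v (Var n) = v n"
| "eval_trm M v (Fn f ts) = fun_int M f (map (eval_trm M v) ts)"
| "eval_trm M v (Cst c) = const_int M c"

fun sat :: "('f, 'r, 'c, 'a) struct \<Rightarrow> ('f, 'r, 'c) fml \<Rightarrow> (nat \<Rightarrow> 'a) \<Rightarrow> bool" where
  "sat M (Eq s t) v = (eval_trm M v s = eval_trm M v t)"
| "sat M (Rel R ts) v = (map (eval_trm M v) ts \<in> rel_int M R)"
| "sat M (Neg \<phi>) v = (\<not> sat M \<phi> v)"
| "sat M (Conj \<phi> \<psi>) v = (sat M \<phi> v \<and> sat M \<psi> v)"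
| "sat M (Ex n \<phi>) v = (\<exists>a \<in> univ M. sat M \<phi> (v(n := a)))"

text \<open>Elementary embedding: an embedding preserving and reflecting all
  \<open>\<L>\<close>-formulas under all assignments of the free variables
  (equivalently: all formulas \<open>\<phi>(a)\<close> with parameters \<open>a\<close> from \<open>M\<close>).\<close>
definition elementary_embedding where
  "elementary_embedding L M N \<alpha> \<longleftrightarrow> embedding L M N \<alpha> \<and>
     (\<forall>\<phi> v. wf_fml L \<phi> \<longrightarrow> range v \<subseteq> univ M \<longrightarrow> (sat M \<phi> v \<longleftrightarrow> sat N \<phi> (\<alpha> \<circ> v)))"

definition G_structure ::
  "('g, 'm) monoid_scheme \<Rightarrow> ('f, 'r, 'c) language \<Rightarrow> ('f, 'r, 'c, 'a) struct
   \<Rightarrow> ('g \<Rightarrow> 'a \<Rightarrow> 'a) \<Rightarrow> bool" where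
  "G_structure G L M act \<longleftrightarrow>
     is_structure L M \<and> group_action G (univ M) act \<and>
     (\<forall>g \<in> carrier G. act g ` (const_int M ` const_syms L) \<subseteq> const_int M ` const_syms L) \<and>
     (\<forall>R \<in> rel_syms L. \<forall>xs \<in> rel_int M R. \<forall>gs. length gs = length xs \<and> set gs \<subseteq> carrier G
        \<longrightarrow> map (\<lambda>(g, x). act g x) (zip gs xs) \<in> rel_int M R) \<and>
     (\<forall>f \<in> fun_syms L. \<forall>g \<in> carrier G. \<forall>xs \<in> tuples (univ M) (fun_ar L f).
        fun_int M f (map (act g) xs) = act g (fun_int M f xs))"

definition equivariant ::
  "('g, 'm) monoid_scheme \<Rightarrow> ('a set) \<Rightarrow> ('g \<Rightarrow> 'a \<Rightarrow> 'a) \<Rightarrow> ('g \<Rightarrow> 'b \<Rightarrow> 'b)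
   \<Rightarrow> ('a \<Rightarrow> 'b) \<Rightarrow> bool" where
  "equivariant G A actM actN \<alpha> \<longleftrightarrow> (\<forall>g \<in> carrier G. \<forall>x \<in> A. \<alpha> (actM g x) = actN g (\<alpha> x))"

text \<open>The four categories \<open>\<MM>_G, \<MM>_G^\<le>, \<MM>_G^\<prec>, \<MM>_G^\<ge>\<close>: objects are
  G-structures, arrows are G-equivariant morphisms / embeddings /
  elementary embeddings / submersions.\<close>
datatype category = Cat_Mor | Cat_Emb | Cat_Elem | Cat_Sub

definition arrow ::
  "category \<Rightarrow> ('g, 'm) monoid_scheme \<Rightarrow> ('f, 'r, 'c) language
   \<Rightarrow> ('f, 'r, 'c, 'a) struct \<Rightarrow> ('g \<Rightarrow> 'a \<Rightarrow> 'a)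
   \<Rightarrow> ('f, 'r, 'c, 'b) struct \<Rightarrow> ('g \<Rightarrow> 'b \<Rightarrow> 'b) \<Rightarrow> ('a \<Rightarrow> 'b) \<Rightarrow> bool" where
  "arrow C G L M actM N actN \<alpha> \<longleftrightarrow>
     equivariant G (univ M) actM actN \<alpha> \<and>
     (case C of
        Cat_Mor \<Rightarrow> morphism L M N \<alpha>
      | Cat_Emb \<Rightarrow> embedding L M N \<alpha>
      | Cat_Elem \<Rightarrow> elementary_embedding L M N \<alpha>
      | Cat_Sub \<Rightarrow> submersion L M N \<alpha>)"

text \<open>Index poset \<open>(D, leq)\<close>, nonempty, downward directed; \<open>\<rho> k i : M i \<rightarrow> M k\<close> for \<open>leq k i\<close>.\<close>
definition directed_system ::
  "('f, 'r, 'c) language \<Rightarrow> 'i set \<Rightarrow> ('i \<Rightarrow> 'i \<Rightarrow> bool)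
   \<Rightarrow> ('i \<Rightarrow> ('f, 'r, 'c, 'a) struct) \<Rightarrow> ('i \<Rightarrow> 'i \<Rightarrow> 'a \<Rightarrow> 'a) \<Rightarrow> bool" where
  "directed_system L D leq M \<rho> \<longleftrightarrow>
     D \<noteq> {} \<and>
     (\<forall>i \<in> D. leq i i) \<and>
     (\<forall>i \<in> D. \<forall>j \<in> D. leq i j \<and> leq j i \<longrightarrow> i = j) \<and>
     (\<forall>i \<in> D. \<forall>j \<in> D. \<forall>k \<in> D. leq i j \<and> leq j k \<longrightarrow> leq i k) \<and>
     (\<forall>i \<in> D. \<forall>j \<in> D. \<exists>k \<in> D. leq k i \<and> leq k j) \<and>
     (\<forall>i \<in> D. is_structure L (M i)) \<and>
     (\<forall>i \<in> D. \<forall>k \<in> D. leq k i \<longrightarrow> morphism L (M i) (M k) (\<rho> k i)) \<and>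
     (\<forall>i \<in> D. \<forall>x \<in> univ (M i). \<rho> i i x = x) \<and>
     (\<forall>i \<in> D. \<forall>k \<in> D. \<forall>l \<in> D. leq l k \<and> leq k i \<longrightarrow>
        (\<forall>x \<in> univ (M i). \<rho> l k (\<rho> k i x) = \<rho> l i x))"

definition germ_rel :: "'i set \<Rightarrow> ('i \<Rightarrow> 'i \<Rightarrow> bool) \<Rightarrow> ('i \<Rightarrow> 'i \<Rightarrow> 'a \<Rightarrow> 'a)
   \<Rightarrow> 'i \<times> 'a \<Rightarrow> 'i \<times> 'a \<Rightarrow> bool" where
  "germ_rel D leq \<rho> p q \<longleftrightarrow>
     (\<exists>k \<in> D. leq k (fst p) \<and> leq k (fst q) \<and> \<rho> k (fst p) (snd p) = \<rho> k (fst q) (snd q))"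

definition disj_union :: "'i set \<Rightarrow> ('i \<Rightarrow> ('f, 'r, 'c, 'a) struct) \<Rightarrow> ('i \<times> 'a) set" where
  "disj_union D M = Sigma D (\<lambda>i. univ (M i))"

definition germ :: "'i set \<Rightarrow> ('i \<Rightarrow> 'i \<Rightarrow> bool) \<Rightarrow> ('i \<Rightarrow> ('f, 'r, 'c, 'a) struct)
   \<Rightarrow> ('i \<Rightarrow> 'i \<Rightarrow> 'a \<Rightarrow> 'a) \<Rightarrow> 'i \<Rightarrow> 'a \<Rightarrow> ('i \<times> 'a) set" where
  "germ D leq M \<rho> i x = {q \<in> disj_union D M. germ_rel D leq \<rho> (i, x) q}"

text \<open>The colimit structure, following the paper's definition (interpretations
  are computed from any chosen representative).\<close>
definition colim :: "'i set \<Rightarrow> ('i \<Rightarrow> 'i \<Rightarrow> bool) \<Rightarrow> ('i \<Rightarrow> ('f, 'r, 'c, 'a) struct)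
   \<Rightarrow> ('i \<Rightarrow> 'i \<Rightarrow> 'a \<Rightarrow> 'a) \<Rightarrow> ('f, 'r, 'c, ('i \<times> 'a) set) struct" where
  "colim D leq M \<rho> =
     \<lparr> univ = (\<lambda>(i, x). germ D leq M \<rho> i x) ` disj_union D M,
       fun_int = (\<lambda>f Xs. let (i, xs) = (SOME (i, xs). i \<in> D \<and> set xs \<subseteq> univ (M i)
                                            \<and> map (germ D leq M \<rho> i) xs = Xs)
                         in germ D leq M \<rho> i (fun_int (M i) f xs)),
       rel_int = (\<lambda>R. {Xs. \<exists>i \<in> D. \<exists>xs \<in> rel_int (M i) R. Xs = map (germ D leq M \<rho> i) xs}),
       const_int = (\<lambda>c. let i = (SOME i. i \<in> D) in germ D leq M \<rho> i (const_int (M i) c)) \<rparr>"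

text \<open>The induced action on the colimit: \<open>g[x] = [g x]\<close> computed from a chosen
  representative (and \<open>undefined\<close> off the universe, as required for
  elements of \<open>BijGroup\<close>).\<close>
definition colim_act :: "'i set \<Rightarrow> ('i \<Rightarrow> 'i \<Rightarrow> bool) \<Rightarrow> ('i \<Rightarrow> ('f, 'r, 'c, 'a) struct)
   \<Rightarrow> ('i \<Rightarrow> 'i \<Rightarrow> 'a \<Rightarrow> 'a) \<Rightarrow> ('i \<Rightarrow> 'g \<Rightarrow> 'a \<Rightarrow> 'a) \<Rightarrow> 'g \<Rightarrow> ('i \<times> 'a) set \<Rightarrow> ('i \<times> 'a) set" where
  "colim_act D leq M \<rho> act g X =
     (if X \<in> univ (colim D leq M \<rho>) then
        (let (i, x) = (SOME (i, x). (i, x) \<in> disj_union D M \<and> germ D leq M \<rho> i x = X)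
         in germ D leq M \<rho> i (act i g x))
      else undefined)"

end

theory Submission
  imports Defs
begin


lemma group_actionI':
  assumes grp: "group G"
    and ext: "\<And>g. g \<in> carrier G \<Longrightarrow> phi g \<in> extensional E"
    and cl: "\<And>g x. g \<in> carrier G \<Longrightarrow> x \<in> E \<Longrightarrow> phi g x \<in> E"
    and one: "\<And>x. x \<in> E \<Longrightarrow> phi \<one>\<^bsub>G\<^esub> x = x"
    and comp: "\<And>g h x. g \<in> carrier G \<Longrightarrow> h \<in> carrier G \<Longrightarrow> x \<in> E \<Longrightarrow> phi (g \<otimes>\<^bsub>G\<^esub> h) x = phi g (phi h x)"
  shows "group_action G E phi"
proof -
  have bij: "phi g \<in> Bij E" if g: "g \<in> carrier G" for g
  proof -
    have ig: "inv\<^bsub>G\<^esub> g \<in> carrier G" using g grp by simp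
    have li: "phi (inv\<^bsub>G\<^esub> g) (phi g x) = x" if "x \<in> E" for x
      using comp[OF ig g that] one[OF that] grp g by (simp add: group.l_inv)
    have ri: "phi g (phi (inv\<^bsub>G\<^esub> g) x) = x" if "x \<in> E" for x
      using comp[OF g ig that] one[OF that] grp g by (simp add: group.r_inv)
    have "inj_on (phi g) E" by (rule inj_on_inverseI[where g = "phi (inv\<^bsub>G\<^esub> g)"]) (use li in auto)
    moreover have "phi g ` E = E"
    proof
      show "phi g ` E \<subseteq> E" using cl g by auto
      show "E \<subseteq> phi g ` E"
      proof
        fix y assume "y \<in> E"
        then show "y \<in> phi g ` E" using ri[of y] cl[OF ig, of y] by (metis image_eqI)
      qed
    qed
    ultimately show ?thesis using ext[OF g] unfolding Bij_def bij_betw_def by simp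
  qed
  show ?thesis
    unfolding group_action_def group_hom_def group_hom_axioms_def hom_def
  proof (intro conjI grp group_BijGroup CollectI ballI)
    show "phi \<in> carrier G \<rightarrow> carrier (BijGroup E)" using bij by (simp add: BijGroup_def)
  next
    fix g h assume g: "g \<in> carrier G" and h: "h \<in> carrier G"
    have gh: "g \<otimes>\<^bsub>G\<^esub> h \<in> carrier G" using grp g h by (simp add: group.is_monoid monoid.m_closed)
    have "phi (g \<otimes>\<^bsub>G\<^esub> h) = compose E (phi g) (phi h)"
    proof
      fix x show "phi (g \<otimes>\<^bsub>G\<^esub> h) x = compose E (phi g) (phi h) x"
        using comp[OF g h] ext[OF gh] by (cases "x \<in> E") (auto simp: compose_def extensional_def)
    qed
    then show "phi (g \<otimes>\<^bsub>G\<^esub> h) = phi g \<otimes>\<^bsub>BijGroup E\<^esub> phi h"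
      using bij[OF g] bij[OF h] by (simp add: BijGroup_def)
  qed
qed

locale dsys =
  fixes L :: "('f, 'r, 'c) language" and D :: "'i set" and leq :: "'i \<Rightarrow> 'i \<Rightarrow> bool"
    and M :: "'i \<Rightarrow> ('f, 'r, 'c, 'a) struct" and \<rho> :: "'i \<Rightarrow> 'i \<Rightarrow> 'a \<Rightarrow> 'a"
  assumes ds: "directed_system L D leq M \<rho>"
begin

abbreviation "gm \<equiv> germ D leq M \<rho>"
abbreviation "DU \<equiv> disj_union D M"

lemma Dne: "D \<noteq> {}" and refl: "i \<in> D \<Longrightarrow> leq i i"
  and trans: "\<lbrakk>i \<in> D; j \<in> D; k \<in> D; leq i j; leq j k\<rbrakk> \<Longrightarrow> leq i k"
  and dir: "\<lbrakk>i \<in> D; j \<in> D\<rbrakk> \<Longrightarrow> \<exists>k \<in> D. leq k i \<and> leq k j"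
  and str: "i \<in> D \<Longrightarrow> is_structure L (M i)"
  and mor: "\<lbrakk>i \<in> D; k \<in> D; leq k i\<rbrakk> \<Longrightarrow> morphism L (M i) (M k) (\<rho> k i)"
  and rid: "\<lbrakk>i \<in> D; x \<in> univ (M i)\<rbrakk> \<Longrightarrow> \<rho> i i x = x"
  and rcomp: "\<lbrakk>i \<in> D; k \<in> D; l \<in> D; leq l k; leq k i; x \<in> univ (M i)\<rbrakk> \<Longrightarrow> \<rho> l k (\<rho> k i x) = \<rho> l i x"
  using ds unfolding directed_system_def by blast+

lemma rin: "\<lbrakk>i \<in> D; k \<in> D; leq k i; x \<in> univ (M i)\<rbrakk> \<Longrightarrow> \<rho> k i x \<in> univ (M k)"
  using mor unfolding morphism_def by blast

lemma rel_iff: "germ_rel D leq \<rho> (i, x) (j, y) \<longleftrightarrow> (\<exists>k \<in> D. leq k i \<and> leq k j \<and> \<rho> k i x = \<rho> k j y)"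
  by (simp add: germ_rel_def)

lemma push: "\<lbrakk>i \<in> D; k \<in> D; l \<in> D; leq k i; leq k j; leq l k; i \<in> D; j \<in> D; x \<in> univ (M i); y \<in> univ (M j);
   \<rho> k i x = \<rho> k j y\<rbrakk> \<Longrightarrow> \<rho> l i x = \<rho> l j y"
  by (metis rcomp)

lemma rel_trans:
  assumes "i \<in> D" "j \<in> D" "l \<in> D" "x \<in> univ (M i)" "y \<in> univ (M j)" "z \<in> univ (M l)"
    "germ_rel D leq \<rho> (i, x) (j, y)" "germ_rel D leq \<rho> (j, y) (l, z)"
  shows "germ_rel D leq \<rho> (i, x) (l, z)"
proof -
  obtain k1 where k1: "k1 \<in> D" "leq k1 i" "leq k1 j" "\<rho> k1 i x = \<rho> k1 j y" using assms(7) rel_iff by blast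
  obtain k2 where k2: "k2 \<in> D" "leq k2 j" "leq k2 l" "\<rho> k2 j y = \<rho> k2 l z" using assms(8) rel_iff by blast
  obtain m where m: "m \<in> D" "leq m k1" "leq m k2" using dir[OF k1(1) k2(1)] by blast
  have "\<rho> m i x = \<rho> m j y" using push[of i k1 m j x y] k1 m assms by blast
  also have "\<dots> = \<rho> m l z" using push[of j k2 m l y z] k2 m assms by blast
  finally show ?thesis unfolding rel_iff using m k1 k2 assms trans by blast
qed

lemma rel_sym: "germ_rel D leq \<rho> p q \<Longrightarrow> germ_rel D leq \<rho> q p"
  unfolding germ_rel_def by metis

lemma rel_refl: "i \<in> D \<Longrightarrow> germ_rel D leq \<rho> (i, x) (i, x)"
  unfolding rel_iff using refl by blast

lemma germ_eq_iff:
  assumes "i \<in> D" "j \<in> D" "x \<in> univ (M i)" "y \<in> univ (M j)"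
  shows "gm i x = gm j y \<longleftrightarrow> germ_rel D leq \<rho> (i, x) (j, y)"
proof
  assume "gm i x = gm j y"
  moreover have "(j, y) \<in> gm j y" unfolding germ_def disj_union_def using assms rel_refl by auto
  ultimately show "germ_rel D leq \<rho> (i, x) (j, y)" unfolding germ_def by auto
next
  assume r: "germ_rel D leq \<rho> (i, x) (j, y)"
  show "gm i x = gm j y"
    unfolding germ_def
  proof (rule Collect_cong, rule conj_cong[OF HOL.refl])
    fix q assume q: "q \<in> DU"
    then obtain l z where lz: "q = (l, z)" "l \<in> D" "z \<in> univ (M l)" unfolding disj_union_def by auto
    show "germ_rel D leq \<rho> (i, x) q = germ_rel D leq \<rho> (j, y) q"
      unfolding lz(1) using rel_trans[of i j l x y z] rel_trans[of j i l y x z] r rel_sym assms lz by blast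
  qed
qed

lemma germ_eq_iff2:
  assumes "i \<in> D" "j \<in> D" "x \<in> univ (M i)" "y \<in> univ (M j)"
  shows "gm i x = gm j y \<longleftrightarrow> (\<exists>k \<in> D. leq k i \<and> leq k j \<and> \<rho> k i x = \<rho> k j y)"
  using germ_eq_iff[OF assms] rel_iff by simp

lemma germ_push: "\<lbrakk>i \<in> D; k \<in> D; leq k i; x \<in> univ (M i)\<rbrakk> \<Longrightarrow> gm k (\<rho> k i x) = gm i x"
  apply (subst germ_eq_iff2)
  using rin apply auto
  by (metis refl rid rin)

lemma list_common:
  assumes "i \<in> D" "j \<in> D"
  shows "length xs = length ys \<Longrightarrow> set xs \<subseteq> univ (M i) \<Longrightarrow> set ys \<subseteq> univ (M j) \<Longrightarrow>
    map (gm i) xs = map (gm j) ys \<Longrightarrow> \<exists>k \<in> D. leq k i \<and> leq k j \<and> map (\<rho> k i) xs = map (\<rho> k j) ys"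
proof (induction xs ys rule: list_induct2)
  case Nil
  then show ?case using dir[OF assms] by auto
next
  case (Cons x xs y ys)
  then obtain k1 where k1: "k1 \<in> D" "leq k1 i" "leq k1 j" "map (\<rho> k1 i) xs = map (\<rho> k1 j) ys" by auto
  obtain k2 where k2: "k2 \<in> D" "leq k2 i" "leq k2 j" "\<rho> k2 i x = \<rho> k2 j y"
    using Cons.prems germ_eq_iff2[OF assms, of x y] by auto
  obtain m where m: "m \<in> D" "leq m k1" "leq m k2" using dir[OF k1(1) k2(1)] by blast
  have "\<rho> m i x = \<rho> m j y" using push[of i k2 m j x y] k2 m assms Cons.prems by simp
  moreover have "map (\<rho> m i) xs = map (\<rho> m j) ys"
  proof -
    have "map (\<rho> m i) xs = map (\<rho> m k1) (map (\<rho> k1 i) xs)"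
      using Cons.prems k1(1,2) m assms by (auto simp: rcomp)
    also have "\<dots> = map (\<rho> m k1) (map (\<rho> k1 j) ys)" using k1 by simp
    also have "\<dots> = map (\<rho> m j) ys"
      using Cons.prems k1(1,3) m assms by (auto simp: rcomp)
    finally show ?thesis .
  qed
  moreover have "leq m i" using trans[of m k1 i] m k1 assms by blast
  moreover have "leq m j" using trans[of m k1 j] m k1 assms by blast
  ultimately show ?case using m by auto
qed

lemma fun_wd:
  assumes "i \<in> D" "j \<in> D" "f \<in> fun_syms L" "xs \<in> tuples (univ (M i)) (fun_ar L f)"
    "ys \<in> tuples (univ (M j)) (fun_ar L f)" "map (gm i) xs = map (gm j) ys"
  shows "gm i (fun_int (M i) f xs) = gm j (fun_int (M j) f ys)"
proof -
  have l: "length xs = length ys" "set xs \<subseteq> univ (M i)" "set ys \<subseteq> univ (M j)"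
    using assms(4,5) by (auto simp: tuples_def)
  obtain k where k: "k \<in> D" "leq k i" "leq k j" "map (\<rho> k i) xs = map (\<rho> k j) ys"
    using list_common[OF assms(1,2) l assms(6)] by blast
  have fi: "fun_int (M i) f xs \<in> univ (M i)" "fun_int (M j) f ys \<in> univ (M j)"
    using str assms unfolding is_structure_def by blast+
  have "\<rho> k i (fun_int (M i) f xs) = fun_int (M k) f (map (\<rho> k i) xs)"
    using mor[OF assms(1) k(1,2)] assms(3,4) unfolding morphism_def by blast
  also have "\<dots> = \<rho> k j (fun_int (M j) f ys)"
    using mor[OF assms(2) k(1,3)] assms(3,5) k(4) unfolding morphism_def by metis
  finally show ?thesis using germ_eq_iff2[OF assms(1,2) fi] k by blast
qed

abbreviation "CL \<equiv> colim D leq M \<rho>"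

lemma univ_CL: "univ CL = (\<lambda>(i, x). gm i x) ` DU"
  by (simp add: colim_def)

lemma gm_in: "\<lbrakk>i \<in> D; x \<in> univ (M i)\<rbrakk> \<Longrightarrow> gm i x \<in> univ CL"
  unfolding univ_CL disj_union_def by force

lemma univ_CL_E: "X \<in> univ CL \<Longrightarrow> (\<And>i x. i \<in> D \<Longrightarrow> x \<in> univ (M i) \<Longrightarrow> X = gm i x \<Longrightarrow> P) \<Longrightarrow> P"
  unfolding univ_CL disj_union_def by force

lemma rep_list: "set Xs \<subseteq> univ CL \<Longrightarrow> \<exists>i \<in> D. \<exists>xs. set xs \<subseteq> univ (M i) \<and> map (gm i) xs = Xs"
proof (induction Xs)
  case Nil
  then show ?case using Dne by auto
next
  case (Cons X Xs)
  then obtain i xs where ix: "i \<in> D" "set xs \<subseteq> univ (M i)" "map (gm i) xs = Xs" by auto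
  have "X \<in> univ CL" using Cons.prems by simp
  then obtain j y where jy: "j \<in> D" "y \<in> univ (M j)" "X = gm j y" by (rule univ_CL_E)
  obtain k where k: "k \<in> D" "leq k i" "leq k j" using dir[OF ix(1) jy(1)] by blast
  have "map (gm k) (\<rho> k j y # map (\<rho> k i) xs) = X # Xs"
  proof -
    have "map (gm k) (map (\<rho> k i) xs) = map (gm i) xs"
      unfolding map_map
    proof (rule map_cong[OF HOL.refl])
      fix x assume "x \<in> set xs"
      then show "(gm k \<circ> \<rho> k i) x = gm i x" using ix(1,2) k germ_push[of i k x] by auto
    qed
    moreover have "gm k (\<rho> k j y) = gm j y" using jy k germ_push[of j k y] by auto
    ultimately show ?thesis using ix jy by simp
  qed
  moreover have "set (\<rho> k j y # map (\<rho> k i) xs) \<subseteq> univ (M k)"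
  proof -
    have "\<rho> k j y \<in> univ (M k)" by (rule rin[OF jy(1) k(1) k(3) jy(2)])
    moreover have "set (map (\<rho> k i) xs) \<subseteq> univ (M k)" using rin[OF ix(1) k(1) k(2)] ix(2) by auto
    ultimately show ?thesis by simp
  qed
  ultimately show ?case using k(1) by (intro bexI[of _ k] exI[of _ "\<rho> k j y # map (\<rho> k i) xs"]) auto
qed

lemma fun_CL:
  assumes "i \<in> D" "f \<in> fun_syms L" "xs \<in> tuples (univ (M i)) (fun_ar L f)"
  shows "fun_int CL f (map (gm i) xs) = gm i (fun_int (M i) f xs)"
proof -
  let ?P = "\<lambda>(j, ys). j \<in> D \<and> set ys \<subseteq> univ (M j) \<and> map (gm j) ys = map (gm i) xs"
  have ex: "\<exists>p. ?P p" using assms(1,3) by (auto simp: tuples_def)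
  obtain j ys where p: "(SOME p. ?P p) = (j, ys)" by (rule prod.exhaust)
  have P: "?P (j, ys)" using someI_ex[OF ex] p by simp
  then have Pj: "j \<in> D" "set ys \<subseteq> univ (M j)" "map (gm j) ys = map (gm i) xs" by simp_all
  have "fun_int CL f (map (gm i) xs) = gm j (fun_int (M j) f ys)"
    by (simp add: colim_def p)
  also have "\<dots> = gm i (fun_int (M i) f xs)"
  proof (rule fun_wd)
    have "length ys = length xs" using Pj(3) by (rule map_eq_imp_length_eq)
    then show "ys \<in> tuples (univ (M j)) (fun_ar L f)" using Pj(2) assms(3) by (simp add: tuples_def)
  qed (use Pj assms in simp_all)
  finally show ?thesis .
qed

lemma const_wd: "\<lbrakk>i \<in> D; j \<in> D; c \<in> const_syms L\<rbrakk> \<Longrightarrow> gm i (const_int (M i) c) = gm j (const_int (M j) c)"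
proof -
  assume a: "i \<in> D" "j \<in> D" "c \<in> const_syms L"
  obtain k where k: "k \<in> D" "leq k i" "leq k j" using dir[OF a(1,2)] by blast
  have "\<rho> k i (const_int (M i) c) = \<rho> k j (const_int (M j) c)"
    using mor[OF a(1) k(1,2)] mor[OF a(2) k(1,3)] a(3) unfolding morphism_def by metis
  moreover have "const_int (M i) c \<in> univ (M i)" "const_int (M j) c \<in> univ (M j)"
    using str a unfolding is_structure_def by blast+
  ultimately show ?thesis using germ_eq_iff2 a k by blast
qed

lemma const_CL: "\<lbrakk>i \<in> D; c \<in> const_syms L\<rbrakk> \<Longrightarrow> const_int CL c = gm i (const_int (M i) c)"
  apply (simp add: colim_def Let_def)
  by (metis Dne const_wd ex_in_conv someI_ex)

lemma rel_CL: "rel_int CL R = {Xs. \<exists>i \<in> D. \<exists>xs \<in> rel_int (M i) R. Xs = map (gm i) xs}"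
  by (simp add: colim_def)

lemma is_structure_CL: "is_structure L CL"
  unfolding is_structure_def
proof (intro conjI ballI)
  show "univ CL \<noteq> {}" using Dne str unfolding is_structure_def univ_CL disj_union_def by blast
next
  fix f Xs assume f: "f \<in> fun_syms L" and X: "Xs \<in> tuples (univ CL) (fun_ar L f)"
  then obtain i xs where ix: "i \<in> D" "set xs \<subseteq> univ (M i)" "map (gm i) xs = Xs"
    using rep_list unfolding tuples_def by blast
  have xs: "xs \<in> tuples (univ (M i)) (fun_ar L f)" using ix X by (auto simp: tuples_def)
  have "fun_int (M i) f xs \<in> univ (M i)" using str ix(1) f xs unfolding is_structure_def by blast
  then show "fun_int CL f Xs \<in> univ CL" using fun_CL[OF ix(1) f xs] ix gm_in by simp
next
  fix R assume R: "R \<in> rel_syms L"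
  show "rel_int CL R \<subseteq> tuples (univ CL) (rel_ar L R)"
  proof
    fix Xs assume "Xs \<in> rel_int CL R"
    then obtain i xs where "i \<in> D" "xs \<in> rel_int (M i) R" "Xs = map (gm i) xs" unfolding rel_CL by blast
    moreover then have "xs \<in> tuples (univ (M i)) (rel_ar L R)" using str R unfolding is_structure_def by blast
    ultimately show "Xs \<in> tuples (univ CL) (rel_ar L R)" using gm_in by (auto simp: tuples_def)
  qed
next
  fix c assume "c \<in> const_syms L"
  moreover obtain i where "i \<in> D" using Dne by blast
  ultimately show "const_int CL c \<in> univ CL" using const_CL gm_in str unfolding is_structure_def by metis
qed

lemma morphism_gm: "i \<in> D \<Longrightarrow> morphism L (M i) CL (gm i)"
  unfolding morphism_def using gm_in fun_CL const_CL by (auto simp: rel_CL)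

end

locale gsys = dsys L D leq M \<rho>
  for L :: "('f, 'r, 'c) language" and D :: "'i set" and leq :: "'i \<Rightarrow> 'i \<Rightarrow> bool"
    and M :: "'i \<Rightarrow> ('f, 'r, 'c, 'a) struct" and \<rho> :: "'i \<Rightarrow> 'i \<Rightarrow> 'a \<Rightarrow> 'a" +
  fixes G :: "('g, 'm) monoid_scheme" and act :: "'i \<Rightarrow> 'g \<Rightarrow> 'a \<Rightarrow> 'a"
  assumes grp: "group G"
    and gstr: "\<forall>i \<in> D. G_structure G L (M i) (act i)"
    and eqv: "\<forall>i \<in> D. \<forall>k \<in> D. leq k i \<longrightarrow> equivariant G (univ (M i)) (act i) (act k) (\<rho> k i)"
begin

abbreviation "CA \<equiv> colim_act D leq M \<rho> act"

lemma ga: "i \<in> D \<Longrightarrow> group_action G (univ (M i)) (act i)"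
  using gstr unfolding G_structure_def by blast

lemma act_in: "\<lbrakk>i \<in> D; g \<in> carrier G; x \<in> univ (M i)\<rbrakk> \<Longrightarrow> act i g x \<in> univ (M i)"
  using group_action.bij_prop0[OF ga] Bij_imp_funcset by blast

lemma act_comp: "\<lbrakk>i \<in> D; g \<in> carrier G; h \<in> carrier G; x \<in> univ (M i)\<rbrakk> \<Longrightarrow> act i (g \<otimes>\<^bsub>G\<^esub> h) x = act i g (act i h x)"
  using group_action.composition_rule[OF ga] by blast

lemma act_one: "\<lbrakk>i \<in> D; x \<in> univ (M i)\<rbrakk> \<Longrightarrow> act i \<one>\<^bsub>G\<^esub> x = x"
  using group_action.id_eq_one[OF ga] by (metis restrict_apply')

lemma rho_act: "\<lbrakk>i \<in> D; k \<in> D; leq k i; g \<in> carrier G; x \<in> univ (M i)\<rbrakk> \<Longrightarrow> \<rho> k i (act i g x) = act k g (\<rho> k i x)"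
  using eqv unfolding equivariant_def by blast

lemma ca_germ:
  assumes i: "i \<in> D" and g: "g \<in> carrier G" and x: "x \<in> univ (M i)"
  shows "CA g (gm i x) = gm i (act i g x)"
proof -
  let ?P = "\<lambda>(j, y). (j, y) \<in> DU \<and> gm j y = gm i x"
  have ex: "\<exists>p. ?P p" using i x by (auto simp: disj_union_def)
  obtain j y where p: "(SOME p. ?P p) = (j, y)" by (rule prod.exhaust)
  have P: "?P (j, y)" using someI_ex[OF ex] p by simp
  then have Pj: "j \<in> D" "y \<in> univ (M j)" "gm j y = gm i x" by (simp_all add: disj_union_def)
  have "CA g (gm i x) = gm j (act j g y)"
    unfolding colim_act_def using gm_in[OF i x] by (simp add: p)
  also have "\<dots> = gm i (act i g x)"
  proof -
    obtain k where k: "k \<in> D" "leq k j" "leq k i" "\<rho> k j y = \<rho> k i x"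
      using germ_eq_iff2[OF Pj(1) i Pj(2) x] Pj(3) by blast
    have "\<rho> k j (act j g y) = \<rho> k i (act i g x)"
      using rho_act[OF Pj(1) k(1,2) g Pj(2)] rho_act[OF i k(1,3) g x] k(4) by simp
    then show ?thesis
      using germ_eq_iff2[OF Pj(1) i act_in[OF Pj(1) g Pj(2)] act_in[OF i g x]] k by blast
  qed
  finally show ?thesis .
qed

lemma ca_out: "X \<notin> univ CL \<Longrightarrow> CA g X = undefined"
  unfolding colim_act_def by simp

lemma ga_CL: "group_action G (univ CL) CA"
proof (rule group_actionI'[OF grp])
  fix g assume "g \<in> carrier G"
  show "CA g \<in> extensional (univ CL)" using ca_out by (auto simp: extensional_def)
next
  fix g X assume g: "g \<in> carrier G" and X: "X \<in> univ CL"
  then obtain i x where ix: "i \<in> D" "x \<in> univ (M i)" "X = gm i x" by (elim univ_CL_E)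
  show "CA g X \<in> univ CL" using ca_germ[OF ix(1) g ix(2)] gm_in[OF ix(1) act_in[OF ix(1) g ix(2)]] ix(3) by simp
next
  fix X assume X: "X \<in> univ CL"
  then obtain i x where ix: "i \<in> D" "x \<in> univ (M i)" "X = gm i x" by (elim univ_CL_E)
  have o: "\<one>\<^bsub>G\<^esub> \<in> carrier G" using grp by (simp add: group.is_monoid monoid.one_closed)
  show "CA \<one>\<^bsub>G\<^esub> X = X" using ca_germ[OF ix(1) o ix(2)] act_one[OF ix(1,2)] ix(3) by simp
next
  fix g h X assume g: "g \<in> carrier G" and h: "h \<in> carrier G" and X: "X \<in> univ CL"
  then obtain i x where ix: "i \<in> D" "x \<in> univ (M i)" "X = gm i x" by (elim univ_CL_E)
  have gh: "g \<otimes>\<^bsub>G\<^esub> h \<in> carrier G" using grp g h by (simp add: group.is_monoid monoid.m_closed)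
  show "CA (g \<otimes>\<^bsub>G\<^esub> h) X = CA g (CA h X)"
    using ca_germ[OF ix(1) gh ix(2)] ca_germ[OF ix(1) h ix(2)] ca_germ[OF ix(1) g act_in[OF ix(1) h ix(2)]]
      act_comp[OF ix(1) g h ix(2)] ix(3) by simp
qed

lemma G_structure_CL: "G_structure G L CL CA"
  unfolding G_structure_def
proof (intro conjI ballI allI impI is_structure_CL ga_CL)
  fix g assume g: "g \<in> carrier G"
  obtain i where i: "i \<in> D" using Dne by blast
  show "CA g ` (const_int CL ` const_syms L) \<subseteq> const_int CL ` const_syms L"
  proof
    fix Y assume "Y \<in> CA g ` (const_int CL ` const_syms L)"
    then obtain c where c: "c \<in> const_syms L" "Y = CA g (const_int CL c)" by blast
    have cu: "const_int (M i) c \<in> univ (M i)" using str[OF i] c(1) unfolding is_structure_def by blast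
    have "act i g (const_int (M i) c) \<in> act i g ` (const_int (M i) ` const_syms L)" using c(1) by blast
    then obtain c' where c': "c' \<in> const_syms L" "act i g (const_int (M i) c) = const_int (M i) c'"
      using gstr i g unfolding G_structure_def by blast
    have "Y = gm i (const_int (M i) c')"
      using c const_CL[OF i c(1)] ca_germ[OF i g cu] c'(2) by simp
    then show "Y \<in> const_int CL ` const_syms L" using const_CL[OF i c'(1)] c'(1) by auto
  qed
next
  fix R Xs gs assume R: "R \<in> rel_syms L" and Xs: "Xs \<in> rel_int CL R"
    and gs: "length gs = length Xs \<and> set gs \<subseteq> carrier G"
  then obtain i xs where ix: "i \<in> D" "xs \<in> rel_int (M i) R" "Xs = map (gm i) xs" unfolding rel_CL by blast
  have xu: "set xs \<subseteq> univ (M i)" using str[OF ix(1)] R ix(2) unfolding is_structure_def tuples_def by blast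
  have len: "length gs = length xs" using gs ix(3) by simp
  have gen: "map (\<lambda>(g, X). CA g X) (zip hs (map (gm i) ys)) = map (gm i) (map (\<lambda>(g, x). act i g x) (zip hs ys))"
    if "length hs = length ys" "set hs \<subseteq> carrier G" "set ys \<subseteq> univ (M i)" for hs ys
    using that by (induction hs ys rule: list_induct2) (auto simp: ca_germ[OF ix(1)])
  have "map (\<lambda>(g, X). CA g X) (zip gs Xs) = map (gm i) (map (\<lambda>(g, x). act i g x) (zip gs xs))"
    unfolding ix(3) using gen len gs xu by blast
  moreover have "map (\<lambda>(g, x). act i g x) (zip gs xs) \<in> rel_int (M i) R"
    using gstr ix(1,2) R len gs unfolding G_structure_def by blast
  ultimately show "map (\<lambda>(g, X). CA g X) (zip gs Xs) \<in> rel_int CL R"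
    unfolding rel_CL using ix(1) by blast
next
  fix f g Xs assume f: "f \<in> fun_syms L" and g: "g \<in> carrier G" and Xs: "Xs \<in> tuples (univ CL) (fun_ar L f)"
  then obtain i xs where ix: "i \<in> D" "set xs \<subseteq> univ (M i)" "map (gm i) xs = Xs"
    using rep_list unfolding tuples_def by blast
  have xs: "xs \<in> tuples (univ (M i)) (fun_ar L f)" using ix Xs by (auto simp: tuples_def)
  have axs: "map (act i g) xs \<in> tuples (univ (M i)) (fun_ar L f)" using xs act_in[OF ix(1) g] by (auto simp: tuples_def)
  have m: "map (CA g) Xs = map (gm i) (map (act i g) xs)"
    unfolding ix(3)[symmetric] map_map using ix(2) by (intro map_cong HOL.refl) (auto simp: ca_germ[OF ix(1) g])
  have fu: "fun_int (M i) f xs \<in> univ (M i)" using str[OF ix(1)] f xs unfolding is_structure_def by blast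
  have "fun_int CL f (map (CA g) Xs) = gm i (fun_int (M i) f (map (act i g) xs))"
    using m fun_CL[OF ix(1) f axs] by simp
  also have "\<dots> = gm i (act i g (fun_int (M i) f xs))"
    using gstr ix(1) f g xs unfolding G_structure_def by simp
  also have "\<dots> = CA g (fun_int CL f Xs)"
    using ca_germ[OF ix(1) g fu] fun_CL[OF ix(1) f xs] ix(3) by simp
  finally show "fun_int CL f (map (CA g) Xs) = CA g (fun_int CL f Xs)" .
qed

end

theorem proposition2p6p1:
  fixes G :: "('g, 'm) monoid_scheme"
    and L :: "('f, 'r, 'c) language"
    and C :: category
    and D :: "'i set" and leq :: "'i \<Rightarrow> 'i \<Rightarrow> bool"
    and M :: "'i \<Rightarrow> ('f, 'r, 'c, 'a) struct"
    and \<rho> :: "'i \<Rightarrow> 'i \<Rightarrow> 'a \<Rightarrow> 'a"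
    and act :: "'i \<Rightarrow> 'g \<Rightarrow> 'a \<Rightarrow> 'a"
  assumes "group G"
    and "is_language L"
    and "directed_system L D leq M \<rho>"
    and "\<forall>i \<in> D. G_structure G L (M i) (act i)"
    and "\<forall>i \<in> D. \<forall>k \<in> D. leq k i \<longrightarrow> arrow C G L (M i) (act i) (M k) (act k) (\<rho> k i)"
  shows "(\<forall>g \<in> carrier G. \<forall>i \<in> D. \<forall>x \<in> univ (M i).
            colim_act D leq M \<rho> act g (germ D leq M \<rho> i x) = germ D leq M \<rho> i (act i g x))
       \<and> G_structure G L (colim D leq M \<rho>) (colim_act D leq M \<rho> act)
       \<and> (\<forall>i \<in> D. morphism L (M i) (colim D leq M \<rho>) (germ D leq M \<rho> i)
                 \<and> equivariant G (univ (M i)) (act i) (colim_act D leq M \<rho> act) (germ D leq M \<rho> i))"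
proof -
  interpret gsys L D leq M \<rho> G act
  proof (intro gsys.intro dsys.intro gsys_axioms.intro)
    show "directed_system L D leq M \<rho>" by fact
    show "group G" by fact
    show "\<forall>i \<in> D. G_structure G L (M i) (act i)" by fact
    show "\<forall>i \<in> D. \<forall>k \<in> D. leq k i \<longrightarrow> equivariant G (univ (M i)) (act i) (act k) (\<rho> k i)"
      using assms(5) unfolding arrow_def by blast
  qed
  show ?thesis
    using ca_germ G_structure_CL morphism_gm by (auto simp: equivariant_def)
qed

end
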